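(* Let $B$ be a singleton board with $n$ columns, and let $M$ be the maximum entry of its $m$-level root vector $\xi_m(B)$. If the first occurrence of $M$ in $\xi_m(B)$ is in position $j$, then $B$ is connected by a sequence of edges in the $m$-level rook equivalence graph $G_m(B)$ to a board $B'$ whose $m$-level root vector $\xi_m(B')$ agrees with $\xi_m(B)$ in the first $j$ positions and is weakly decreasing in the positions $i\ge j$.
   Context: Fix an integer $m>0$. A Ferrers board is given by a weakly increasing sequence of non-negative integers $B=(b_1,\ldots,b_n)$ of column heights (cells in column $i$, rows $1,\ldots,b_i$, of the first quadrant); prepending height-$0$ columns on the left does not change the board, and boards are compared with the same number of columns by such padding. The rows are partitioned into levels: level $t$ consists of rows $(t-1)m+1,\ldots,tm$. An $m$-level rook placement of $k$ rooks is a set of $k$ cells of $B$, no two in the same level or the same column; $r_{k,m}(B)$ is their number, and two boards are $m$-level rook equivalent if they have equal $r_{k,m}$ for all $k\ge0$. For an integer $o$, $\lfloor o\rfloor_m$ is the largest multiple of $m$ that is $\le o$. $B$ is singleton if for each $i<n$, $b_i-\lfloor b_i\rfloor_m\ne0$ implies $\lfloor b_i\rfloor_m<\lfloor b_{i+1}\rfloor_m$. The $m$-level root vector of $B$ is $\xi_m(B)=\langle 0-b_1,m-b_2,\ldots,m(n-1)-b_n\rangle$. The $m$-level rook equivalence graph $G_m(B)$ of a singleton board $B$ has as vertices all singleton boards $m$-level rook equivalent to $B$, and $\{B_1,B_2\}$ is an edge iff, written with the same number of columns, $B_1$ and $B_2$ differ in exactly two columns $i,j$, where $B_1$ has $k$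 more cells than $B_2$ in column $i$ and $k$ fewer in column $j$, for some $k>0$. *)

theory Defs
  imports Main
begin

(* A board is a list of column heights b_1..b_n (list index 0 = column 1).
   Cells: (column index i, row r) with 1 <= r <= b!i. *)

definition ferrers :: "nat list \<Rightarrow> bool" where
  "ferrers b \<longleftrightarrow> sorted b"

definition pad :: "nat \<Rightarrow> nat list \<Rightarrow> nat list" where
  "pad k b = replicate k 0 @ b"

definition cells :: "nat list \<Rightarrow> (nat \<times> nat) set" where
  "cells b = {(i, r). i < length b \<and> 1 \<le> r \<and> r \<le> b ! i}"

definition level :: "nat \<Rightarrow> nat \<Rightarrow> nat" where
  "level m r = (r - 1) div m + 1"

definition rook_placements :: "nat \<Rightarrow> nat \<Rightarrow> nat list \<Rightarrow> (nat \<times> nat) set set" where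
  "rook_placements m k b = {P. P \<subseteq> cells b \<and> card P = k \<and> inj_on fst P \<and>
                               inj_on (\<lambda>(i, r). level m r) P}"

definition rook_num :: "nat \<Rightarrow> nat \<Rightarrow> nat list \<Rightarrow> nat" where
  "rook_num m k b = card (rook_placements m k b)"

definition rook_equiv :: "nat \<Rightarrow> nat list \<Rightarrow> nat list \<Rightarrow> bool" where
  "rook_equiv m b c \<longleftrightarrow> (\<forall>k. rook_num m k b = rook_num m k c)"

definition floor_m :: "nat \<Rightarrow> nat \<Rightarrow> nat" where
  "floor_m m x = (x div m) * m"

definition singleton_board :: "nat \<Rightarrow> nat list \<Rightarrow> bool" where
  "singleton_board m b \<longleftrightarrow>
     (\<forall>i. Suc i < length b \<longrightarrow> b ! i - floor_m m (b ! i) \<noteq> 0 \<longrightarrow>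
          floor_m m (b ! i) < floor_m m (b ! Suc i))"

(* root vector <0 - b_1, m - b_2, ..., m(n-1) - b_n>, 0-indexed *)
definition root_vec :: "nat \<Rightarrow> nat list \<Rightarrow> int list" where
  "root_vec m b = map (\<lambda>i. int (m * i) - int (b ! i)) [0..<length b]"

definition rook_edge :: "nat list \<Rightarrow> nat list \<Rightarrow> bool" where
  "rook_edge b1 b2 \<longleftrightarrow>
     (\<exists>N. length b1 \<le> N \<and> length b2 \<le> N \<and>
        (let p1 = pad (N - length b1) b1; p2 = pad (N - length b2) b2 in
          \<exists>i j k. i < N \<and> j < N \<and> i \<noteq> j \<and> k > 0 \<and>
            p1 ! i = p2 ! i + k \<and> p2 ! j = p1 ! j + k \<and>
            (\<forall>l<N. l \<noteq> i \<longrightarrow> l \<noteq> j \<longrightarrow> p1 ! l = p2 ! l)))"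

definition graph_vertices :: "nat \<Rightarrow> nat list \<Rightarrow> nat list set" where
  "graph_vertices m b = {c. ferrers c \<and> singleton_board m c \<and> rook_equiv m c b}"

definition graph_edge :: "nat \<Rightarrow> nat list \<Rightarrow> nat list \<Rightarrow> nat list \<Rightarrow> bool" where
  "graph_edge m b c d \<longleftrightarrow>
     c \<in> graph_vertices m b \<and> d \<in> graph_vertices m b \<and> rook_edge c d"

end

theory Submission
  imports Defs "HOL-Library.Multiset"
begin


fun Rr :: "nat \<Rightarrow> nat \<Rightarrow> int list \<Rightarrow> int" where
  "Rr m 0 ys = 1"
| "Rr m (Suc k) [] = 0"
| "Rr m (Suc k) (e # ys) = Rr m (Suc k) ys + Rr m k ys * (int m * (int (length ys) - int k) - e)"

lemma Rr_swap: "Rr m k (a # b # ys) = Rr m k (b # a # ys)"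
proof (cases k)
  case 0 then show ?thesis by simp
next
  case (Suc k')
  then show ?thesis
  proof (cases k')
    case 0 then show ?thesis using Suc by (simp add: algebra_simps)
  next
    case (Suc k'') then show ?thesis using \<open>k = Suc k'\<close> by (simp add: algebra_simps)
  qed
qed

lemma Rr_cong: "(\<And>k. Rr m k l1 = Rr m k l2) \<Longrightarrow> length l1 = length l2 \<Longrightarrow> Rr m k (u # l1) = Rr m k (u # l2)"
  by (cases k) simp_all

lemma Rr_move: "Rr m k (e # us @ vs) = Rr m k (us @ e # vs)"
proof (induction us arbitrary: k)
  case Nil then show ?case by simp
next
  case (Cons u us)
  have "Rr m k (e # (u # us) @ vs) = Rr m k (u # e # us @ vs)" by (simp add: Rr_swap)
  also have "\<dots> = Rr m k (u # us @ e # vs)" by (rule Rr_cong) (use Cons in auto)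
  finally show ?case by simp
qed

lemma Rr_mset: "mset xs = mset ys \<Longrightarrow> Rr m k xs = Rr m k ys"
proof (induction xs arbitrary: ys k)
  case Nil then show ?case by simp
next
  case (Cons e xs)
  have "e \<in> set ys" using Cons.prems by (metis list.set_intros(1) set_mset_mset)
  then obtain us vs where ys: "ys = us @ e # vs" by (meson split_list)
  have ms: "mset xs = mset (us @ vs)" using Cons.prems ys by simp
  have "Rr m k (e # xs) = Rr m k (e # us @ vs)"
    by (rule Rr_cong) (use Cons.IH[OF ms] mset_eq_length[OF ms] in auto)
  also have "\<dots> = Rr m k ys" using ys Rr_move by simp
  finally show ?case .
qed

definition R :: "nat \<Rightarrow> nat \<Rightarrow> int list \<Rightarrow> int" where "R m k xs = Rr m k (rev xs)"

lemma R_snoc: "R m (Suc k) (xs @ [e]) = R m (Suc k) xs + R m k xs * (int m * (int (length xs) - int k) - e)"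
  by (simp add: R_def)
lemma R_0: "R m 0 xs = 1" by (simp add: R_def)
lemma R_Nil: "R m (Suc k) [] = 0" by (simp add: R_def)
lemma R_mset: "mset xs = mset ys \<Longrightarrow> R m k xs = R m k ys"
  unfolding R_def by (rule Rr_mset) simp

definition okp :: "nat \<Rightarrow> int \<Rightarrow> int \<Rightarrow> bool" where
  "okp m x y \<longleftrightarrow> y \<le> int m * (x div int m + 1)"

definition vc :: "nat \<Rightarrow> int list \<Rightarrow> bool" where
  "vc m x \<longleftrightarrow> (\<forall>i. Suc i < length x \<longrightarrow> okp m (x!i) (x!Suc i))"

lemma pt:
  assumes m: "m > 0"
  shows "((p::nat) \<le> q \<and> (p - floor_m m p \<noteq> 0 \<longrightarrow> floor_m m p < floor_m m q)) \<longleftrightarrow>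
         okp m (int(m*i) - int p) (int(m*Suc i) - int q)"
proof -
  define u v where "u = p div m" and "v = p mod m"
  have p: "p = m*u + v" unfolding u_def v_def by simp
  have vm: "v < m" unfolding v_def using m by simp
  have fl: "floor_m m p = m*u" unfolding floor_m_def u_def by simp
  have flq: "floor_m m q = m*(q div m)" unfolding floor_m_def by simp
  show ?thesis
  proof (cases "v = 0")
    case True
    have e: "int(m*i) - int p = (int i - int u) * int m" using p True by (simp add: algebra_simps)
    have "(int(m*i) - int p) div int m = int i - int u" unfolding e using m by simp
    then show ?thesis unfolding okp_def using True p fl m by (simp add: algebra_simps) (metis of_nat_le_iff of_nat_mult)
  next
    case False
    have e: "int(m*i) - int p = (int m - int v) + (int i - int u - 1) * int m" using p by (simp add: algebra_simps)
    have "(int(m*i) - int p) div int m = (int i - int u - 1) + (int m - int v) div int m"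
      unfolding e using m by (simp only: div_mult_self1)
    also have "(int m - int v) div int m = 0" using vm False by (intro div_pos_pos_trivial) auto
    finally have d: "(int(m*i) - int p) div int m = int i - int u - 1" by simp
    have "(u < q div m) \<longleftrightarrow> Suc u * m \<le> q"
      using less_eq_div_iff_mult_less_eq[OF m, of "Suc u" q] by (simp add: Suc_le_eq)
    then have "floor_m m p < floor_m m q \<longleftrightarrow> m * u + m \<le> q" using fl flq m by (simp add: algebra_simps)
    moreover have "p - floor_m m p \<noteq> 0" using fl p False by simp
    moreover have h: "(int m + int m * int u \<le> int q) = (m + m*u \<le> q)"
      by (simp only: of_nat_mult[symmetric] of_nat_add[symmetric] of_nat_le_iff)
    ultimately show ?thesis unfolding okp_def d using p vm by (simp add: algebra_simps h) linarith
  qed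
qed



lemma root_vec_len[simp]: "length (root_vec m b) = length b" by (simp add: root_vec_def)
lemma root_vec_nth: "i < length b \<Longrightarrow> root_vec m b ! i = int (m*i) - int (b!i)"
  by (simp add: root_vec_def)

lemma valid_iff:
  assumes m: "m > 0"
  shows "(ferrers b \<and> singleton_board m b) \<longleftrightarrow> vc m (root_vec m b)"
proof -
  have "(ferrers b \<and> singleton_board m b) \<longleftrightarrow>
     (\<forall>i. Suc i < length b \<longrightarrow> (b!i \<le> b!Suc i \<and> (b ! i - floor_m m (b ! i) \<noteq> 0 \<longrightarrow>
          floor_m m (b ! i) < floor_m m (b ! Suc i))))"
    unfolding ferrers_def singleton_board_def sorted_iff_nth_Suc by blast
  also have "\<dots> \<longleftrightarrow> vc m (root_vec m b)"
    unfolding vc_def using pt[OF m] by (simp add: root_vec_nth)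
  finally show ?thesis .
qed

definition bd :: "nat \<Rightarrow> int list \<Rightarrow> nat list" where
  "bd m x = map (\<lambda>i. nat (int (m*i) - x!i)) [0..<length x]"

lemma bd_len[simp]: "length (bd m x) = length x" by (simp add: bd_def)

lemma root_bd: "(\<forall>i<length x. x!i \<le> int (m*i)) \<Longrightarrow> root_vec m (bd m x) = x"
  by (intro nth_equalityI) (auto simp: root_vec_def bd_def)

lemma bd_root: "bd m (root_vec m b) = b"
  by (intro nth_equalityI) (auto simp: root_vec_def bd_def)



lemma cells_fin: "finite (cells b)"
proof -
  have "cells b \<subseteq> {..<length b} \<times> {..sum_list b}"
    unfolding cells_def using elem_le_sum_list by fastforce
  then show ?thesis by (rule finite_subset) auto
qed

lemma rp_fin: "finite (rook_placements m k b)"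
proof -
  have "rook_placements m k b \<subseteq> Pow (cells b)" unfolding rook_placements_def by auto
  then show ?thesis using cells_fin by (metis finite_Pow_iff finite_subset)
qed

lemma rp_sub: "P \<in> rook_placements m k b \<Longrightarrow> P \<subseteq> cells b \<and> finite P"
  unfolding rook_placements_def using cells_fin finite_subset by blast

lemma rook0: "rook_num m 0 b = 1"
proof -
  have "rook_placements m 0 b = {{}}"
  proof (intro set_eqI iffI)
    fix P assume a: "P \<in> rook_placements m 0 b"
    have "finite P" using rp_sub[OF a] by simp
    moreover have "card P = 0" using a unfolding rook_placements_def by simp
    ultimately show "P \<in> {{}}" by simp
  next
    fix P :: "(nat \<times> nat) set" assume "P \<in> {{}}" then show "P \<in> rook_placements m 0 b" unfolding rook_placements_def by simp
  qed
  then show ?thesis unfolding rook_num_def by simp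
qed

lemma cells_snoc: "cells (b @ [h]) = cells b \<union> {(length b, r) | r. 1 \<le> r \<and> r \<le> h}"
  unfolding cells_def by (auto simp: nth_append less_Suc_eq)

lemma level_fiber:
  assumes m: "m > 0" and t: "t \<ge> 1"
  shows "{r. 1 \<le> r \<and> level m r = t} = {(t-1)*m+1..t*m}"
proof -
  have "1 \<le> r \<and> level m r = t \<longleftrightarrow> (t-1)*m+1 \<le> r \<and> r \<le> t*m" for r
  proof (cases r)
    case 0 then show ?thesis by simp
  next
    case (Suc s)
    have "level m r = t \<longleftrightarrow> s div m = t - 1" unfolding level_def Suc using t by (simp only: diff_Suc_1) arith
    also have "\<dots> \<longleftrightarrow> (t-1) \<le> s div m \<and> s div m < t" using t by linarith
    also have "\<dots> \<longleftrightarrow> (t-1)*m \<le> s \<and> s < t*m"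
      using less_eq_div_iff_mult_less_eq[OF m, of "t-1" s] div_less_iff_less_mult[OF m, of s t] by simp
    finally show ?thesis unfolding Suc by (simp add: Suc_le_eq less_Suc_eq_le)
  qed
  then show ?thesis by (intro set_eqI) (simp only: mem_Collect_eq atLeastAtMost_iff)
qed

lemma level_iff:
  assumes m: "m > 0" and t: "t \<ge> 1"
  shows "1 \<le> r \<and> level m r = t \<longleftrightarrow> (t-1)*m+1 \<le> r \<and> r \<le> t*m"
  using level_fiber[OF m t] by (simp add: set_eq_iff)

lemma card_fiber:
  assumes m: "m > 0" and t: "t \<ge> 1" "t \<le> h div m"
  shows "card {r\<in>{1..h}. level m r = t} = m"
proof -
  have tm: "t*m \<le> h" using t less_eq_div_iff_mult_less_eq[OF m, of t h] by simp
  have "{r\<in>{1..h}. level m r = t} = {(t-1)*m+1..t*m}"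
  proof (rule set_eqI)
    fix r
    show "r \<in> {r\<in>{1..h}. level m r = t} \<longleftrightarrow> r \<in> {(t-1)*m+1..t*m}"
      using level_iff[OF m t(1), of r] tm by auto
  qed
  then have "card {r\<in>{1..h}. level m r = t} = Suc (t*m) - ((t-1)*m+1)" by simp
  also have "\<dots> = m" using t
  proof -
    obtain t' where "t = Suc t'" using t by (cases t) auto
    then show ?thesis by simp
  qed
  finally show ?thesis .
qed


lemma cardA:
  assumes m: "m > 0" and H: "\<forall>i<length b. b!i \<le> m*(h div m)"
    and P: "P \<in> rook_placements m k b"
  shows "card {r\<in>{1..h}. level m r \<notin> (\<lambda>(i, r). level m r) ` P} = h - m*k \<and> m*k \<le> h"
proof -
  define L where "L = (\<lambda>(i, r). level m r) ` P"
  have Pc: "P \<subseteq> cells b" and Pf: "finite P" using rp_sub[OF P] by auto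
  have cP: "card P = k" and injl: "inj_on (\<lambda>(i, r). level m r) P"
    using P unfolding rook_placements_def by auto
  have cL: "card L = k" unfolding L_def using card_image[OF injl] cP by simp
  have fL: "finite L" unfolding L_def using Pf by simp
  have Lsub: "L \<subseteq> {1..h div m}"
  proof
    fix t assume "t \<in> L"
    then obtain i r where ir: "(i, r) \<in> P" and t: "t = level m r" unfolding L_def by auto
    then have "i < length b" "1 \<le> r" "r \<le> b!i" using Pc unfolding cells_def by auto
    then have "r \<le> m*(h div m)" using H by (meson order_trans)
    then have "r - 1 < (h div m) * m" using \<open>1 \<le> r\<close> by (simp add: mult.commute)
    then have "(r - 1) div m < h div m" using div_less_iff_less_mult[OF m] by blast
    then show "t \<in> {1..h div m}" unfolding t level_def by simp
  qed
  define U where "U = {r\<in>{1..h}. level m r \<in> L}"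
  have U: "U = (\<Union>t\<in>L. {r\<in>{1..h}. level m r = t})" unfolding U_def by auto
  have "card U = (\<Sum>t\<in>L. card {r\<in>{1..h}. level m r = t})"
    unfolding U by (rule card_UN_disjoint) (use fL in auto)
  also have "\<dots> = (\<Sum>t\<in>L. m)"
    by (rule sum.cong) (use Lsub card_fiber[OF m] in auto)
  finally have cU: "card U = k * m" using cL by simp
  have Usub: "U \<subseteq> {1..h}" unfolding U_def by auto
  have "card U \<le> h" using card_mono[OF _ Usub] by simp
  then have mk: "m * k \<le> h" using cU by (simp add: mult.commute)
  have "{r\<in>{1..h}. level m r \<notin> (\<lambda>(i, r). level m r) ` P} = {1..h} - U"
    unfolding U_def L_def by auto
  then have "card {r\<in>{1..h}. level m r \<notin> (\<lambda>(i, r). level m r) ` P} = h - k*m"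
    using card_Diff_subset[OF _ Usub] cU by (simp add: finite_subset[OF Usub])
  then show ?thesis using mk by (simp add: mult.commute)
qed


lemma rook_snoc:
  assumes m: "m > 0" and H: "\<forall>i<length b. b!i \<le> m*(h div m)"
  shows "rook_num m (Suc k) (b@[h]) = rook_num m (Suc k) b + rook_num m k b * (h - m*k)"
proof -
  define n where "n = length b"
  define RP where "RP = rook_placements m (Suc k) (b@[h])"
  define S1 where "S1 = rook_placements m (Suc k) b"
  define S2 where "S2 = {P\<in>RP. \<exists>r. (n, r) \<in> P}"
  define A where "A = (\<lambda>P::(nat\<times>nat) set. {r\<in>{1..h}. level m r \<notin> (\<lambda>(i, r). level m r) ` P})"
  define f where "f = (\<lambda>(P::(nat\<times>nat) set, r::nat). insert (n, r) P)"
  have cs: "cells (b@[h]) = cells b \<union> {(n, r) | r. 1 \<le> r \<and> r \<le> h}"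
    unfolding n_def by (rule cells_snoc)
  have cb: "(i, r) \<in> cells b \<Longrightarrow> i < n" for i r unfolding cells_def n_def by auto
  have RP: "RP = S1 \<union> S2"
  proof (intro set_eqI iffI)
    fix P assume P: "P \<in> RP"
    show "P \<in> S1 \<union> S2"
    proof (cases "\<exists>r. (n, r) \<in> P")
      case True then show ?thesis using P unfolding S2_def by blast
    next
      case False
      have "P \<subseteq> cells (b@[h])" using rp_sub P unfolding RP_def by blast
      then have "P \<subseteq> cells b" using False unfolding cs by blast
      then show ?thesis using P unfolding S1_def RP_def rook_placements_def by blast
    qed
  next
    fix P assume P: "P \<in> S1 \<union> S2"
    show "P \<in> RP"
    proof (cases "P \<in> S1")
      case True
      then have "P \<subseteq> cells (b@[h])" using rp_sub unfolding S1_def cs by blast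
      then show ?thesis using True unfolding S1_def RP_def rook_placements_def by blast
    next
      case False then show ?thesis using P unfolding S2_def by blast
    qed
  qed
  have disj: "S1 \<inter> S2 = {}"
    unfolding S1_def S2_def rook_placements_def using cb by blast
  have fRP: "finite RP" unfolding RP_def by (rule rp_fin)
  have cRP: "card RP = card S1 + card S2"
    unfolding RP by (rule card_Un_disjoint) (use fRP RP disj in auto)
  have S2: "S2 = f ` (SIGMA P:rook_placements m k b. A P)"
  proof (intro set_eqI iffI)
    fix Q assume Q: "Q \<in> S2"
    then obtain r where r: "(n, r) \<in> Q" unfolding S2_def by auto
    have QRP: "Q \<in> RP" using Q unfolding S2_def by auto
    have Qc: "Q \<subseteq> cells (b@[h])" and Qf: "finite Q" using rp_sub QRP unfolding RP_def by blast+
    have cQ: "card Q = Suc k" and ifst: "inj_on fst Q" and ilev: "inj_on (\<lambda>(i, r). level m r) Q"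
      using QRP unfolding RP_def rook_placements_def by auto
    define P where "P = Q - {(n, r)}"
    have QP: "Q = insert (n, r) P" and nP: "(n, r) \<notin> P" using r unfolding P_def by auto
    have Pc: "P \<subseteq> cells b"
    proof
      fix x assume x: "x \<in> P"
      obtain i s where xi: "x = (i, s)" by (cases x)
      have "i \<noteq> n"
      proof
        assume "i = n"
        then have fx: "fst x = fst (n, r)" using xi by simp
        have "x \<in> Q" using x unfolding P_def by auto
        then have "x = (n, r)" using inj_onD[OF ifst fx] r by auto
        then show False using x nP by simp
      qed
      then show "x \<in> cells b" using x Qc unfolding P_def cs xi by auto
    qed
    have "P \<in> rook_placements m k b"
      unfolding rook_placements_def using Pc cQ ifst ilev Qf r unfolding P_def
      by (auto intro: inj_on_subset simp: card_Diff_singleton)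
    moreover have "r \<in> A P"
    proof -
      have "1 \<le> r \<and> r \<le> h" using r Qc cs cb by auto
      moreover have "level m r \<notin> (\<lambda>(i, r). level m r) ` P"
        using ilev unfolding QP using nP by auto
      ultimately show ?thesis unfolding A_def by auto
    qed
    ultimately show "Q \<in> f ` (SIGMA P:rook_placements m k b. A P)"
      unfolding f_def QP by (auto intro!: image_eqI[where x="(P, r)"])
  next
    fix Q assume "Q \<in> f ` (SIGMA P:rook_placements m k b. A P)"
    then obtain P r where P: "P \<in> rook_placements m k b" and r: "r \<in> A P" and Q: "Q = insert (n, r) P"
      unfolding f_def by auto
    have Pc: "P \<subseteq> cells b" and Pf: "finite P" using rp_sub[OF P] by auto
    have cP: "card P = k" and ifst: "inj_on fst P" and ilev: "inj_on (\<lambda>(i, r). level m r) P"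
      using P unfolding rook_placements_def by auto
    have nP: "(n, r) \<notin> P" using Pc cb by blast
    have nf: "n \<notin> fst ` P" using Pc cb by force
    have rr: "1 \<le> r" "r \<le> h" "level m r \<notin> (\<lambda>(i, r). level m r) ` P" using r unfolding A_def by auto
    have "Q \<subseteq> cells (b@[h])" unfolding Q cs using Pc rr by auto
    moreover have "card Q = Suc k" unfolding Q using Pf nP cP by simp
    moreover have "inj_on fst Q" unfolding Q using ifst nf by auto
    moreover have "inj_on (\<lambda>(i, r). level m r) Q" unfolding Q using ilev rr(3) by auto
    ultimately have "Q \<in> RP" unfolding RP_def rook_placements_def by auto
    then show "Q \<in> S2" unfolding S2_def Q by auto
  qed
  have injf: "inj_on f (SIGMA P:rook_placements m k b. A P)"
  proof (rule inj_onI)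
    fix x y assume x: "x \<in> (SIGMA P:rook_placements m k b. A P)" and y: "y \<in> (SIGMA P:rook_placements m k b. A P)"
      and e: "f x = f y"
    obtain P r where xP: "x = (P, r)" by (cases x)
    obtain P' r' where yP: "y = (P', r')" by (cases y)
    have Pc: "P \<subseteq> cells b" "P' \<subseteq> cells b" using x y rp_sub unfolding xP yP by blast+
    have e2: "insert (n, r) P = insert (n, r') P'" using e unfolding f_def xP yP by simp
    have nP: "\<And>s. (n, s) \<notin> P" "\<And>s. (n, s) \<notin> P'" using Pc cb by blast+
    have "(n, r) \<in> insert (n, r') P'" using e2 by blast
    then have rr: "r = r'" using nP(2) by auto
    have "P = insert (n, r) P - {(n, r)}" using nP(1) by auto
    also have "\<dots> = insert (n, r') P' - {(n, r')}" using e2 rr by simp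
    also have "\<dots> = P'" using nP(2) by auto
    finally have "P = P'" .
    then show "x = y" unfolding xP yP using rr by simp
  qed
  have cA: "\<And>P. P \<in> rook_placements m k b \<Longrightarrow> card (A P) = h - m*k"
    unfolding A_def using cardA[OF m H] by blast
  have "card S2 = card (SIGMA P:rook_placements m k b. A P)"
    unfolding S2 by (rule card_image[OF injf])
  also have "\<dots> = (\<Sum>P\<in>rook_placements m k b. card (A P))"
    by (rule card_SigmaI) (auto simp: rp_fin A_def)
  also have "\<dots> = (\<Sum>P\<in>rook_placements m k b. h - m*k)"
    by (rule sum.cong) (auto simp: cA)
  also have "\<dots> = rook_num m k b * (h - m*k)" unfolding rook_num_def by simp
  finally show ?thesis using cRP unfolding rook_num_def RP_def S1_def by simp
qed

lemma rook_nz: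
  assumes m: "m > 0" and H: "\<forall>i<length b. b!i \<le> m*(h div m)" and "rook_num m k b \<noteq> 0"
  shows "m*k \<le> h"
proof -
  have "rook_placements m k b \<noteq> {}" using assms(3) unfolding rook_num_def by auto
  then obtain P where "P \<in> rook_placements m k b" by auto
  then show ?thesis using cardA[OF m H] by blast
qed


lemma prefix_valid:
  assumes "ferrers (b@[h])" "singleton_board m (b@[h])"
  shows "ferrers b \<and> singleton_board m b"
proof
  show "ferrers b" using assms(1) unfolding ferrers_def by (simp add: sorted_append)
  show "singleton_board m b" unfolding singleton_board_def
  proof (intro allI impI)
    fix i assume i: "Suc i < length b" and nz: "b ! i - floor_m m (b ! i) \<noteq> 0"
    have "(b@[h]) ! i = b ! i" "(b@[h]) ! Suc i = b ! Suc i" using i by (auto simp: nth_append)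
    moreover have "Suc i < length (b@[h])" using i by simp
    then have "(b@[h])!i - floor_m m ((b@[h])!i) \<noteq> 0 \<longrightarrow> floor_m m ((b@[h])!i) < floor_m m ((b@[h])!Suc i)"
      using assms(2) unfolding singleton_board_def by blast
    ultimately show "floor_m m (b ! i) < floor_m m (b ! Suc i)" using nz by simp
  qed
qed

lemma H_of:
  assumes m: "m > 0" and f: "ferrers (b@[h])" and s: "singleton_board m (b@[h])" and i: "i < length b"
  shows "b!i \<le> m*(h div m)"
proof -
  define n where "n = length b"
  have n: "n > 0" using i unfolding n_def by linarith
  define p where "p = b!(n-1)"
  have so: "\<And>x y. x \<le> y \<Longrightarrow> y < Suc n \<Longrightarrow> (b@[h])!x \<le> (b@[h])!y"
    using f unfolding ferrers_def sorted_iff_nth_mono n_def by simp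
  have bi: "b!i \<le> p" using so[of i "n-1"] i n unfolding p_def n_def by (simp add: nth_append)
  have e1: "(b@[h])!(n-1) = p" "(b@[h])!Suc (n-1) = h" using n unfolding p_def n_def by (auto simp: nth_append)
  have "Suc (n-1) < length (b@[h])" using n unfolding n_def by simp
  then have "(b@[h])!(n-1) - floor_m m ((b@[h])!(n-1)) \<noteq> 0 \<longrightarrow> floor_m m ((b@[h])!(n-1)) < floor_m m ((b@[h])!Suc (n-1))"
    using s unfolding singleton_board_def by blast
  then have sing: "p - floor_m m p \<noteq> 0 \<longrightarrow> floor_m m p < floor_m m h" unfolding e1 .
  have ph: "p \<le> h" using so[of "n-1" n] n e1 by simp
  have "p \<le> m*(h div m)"
  proof (cases "p - floor_m m p = 0")
    case True
    then have "p \<le> (p div m) * m" unfolding floor_m_def by simp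
    also have "\<dots> \<le> (h div m) * m" using ph by (simp add: div_le_mono)
    finally show ?thesis by (simp add: mult.commute)
  next
    case False
    then have "(p div m) * m < (h div m) * m" using sing unfolding floor_m_def by simp
    then have "p div m < h div m" by simp
    then have "Suc (p div m) \<le> h div m" by simp
    then have "Suc (p div m) * m \<le> (h div m) * m" by (rule mult_le_mono1)
    moreover have "p < Suc (p div m) * m" using m
      using div_less_iff_less_mult[OF m, of p "Suc (p div m)"] by simp
    ultimately show ?thesis by (simp add: mult.commute)
  qed
  then show ?thesis using bi by simp
qed


lemma root_vec_snoc: "root_vec m (b@[h]) = root_vec m b @ [int (m * length b) - int h]"
  unfolding root_vec_def by (auto simp: nth_append)

lemma rook_R:
  assumes m: "m > 0"
  shows "ferrers b \<Longrightarrow> singleton_board m b \<Longrightarrow> int (rook_num m k b) = R m k (root_vec m b)"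
proof (induction b arbitrary: k rule: rev_induct)
  case Nil
  show ?case
  proof (cases k)
    case 0 then show ?thesis by (simp add: rook0 R_0)
  next
    case (Suc k')
    have "rook_placements m k [] = {}"
      unfolding rook_placements_def cells_def using Suc by auto
    then show ?thesis using Suc by (simp add: rook_num_def R_def root_vec_def)
  qed
next
  case (snoc h b)
  have pv: "ferrers b" "singleton_board m b" using prefix_valid[OF snoc.prems] by auto
  have H: "\<forall>i<length b. b!i \<le> m*(h div m)" using H_of[OF m snoc.prems] by blast
  show ?case
  proof (cases k)
    case 0 then show ?thesis by (simp add: rook0 R_0)
  next
    case (Suc k')
    have IH1: "int (rook_num m (Suc k') b) = R m (Suc k') (root_vec m b)" using snoc.IH[OF pv] .
    have IH2: "int (rook_num m k' b) = R m k' (root_vec m b)" using snoc.IH[OF pv] .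
    have eq: "int (rook_num m k' b * (h - m*k')) = int (rook_num m k' b) * (int h - int m * int k')"
    proof (cases "rook_num m k' b = 0")
      case True then show ?thesis by simp
    next
      case False
      then have "m*k' \<le> h" using rook_nz[OF m H] by blast
      then show ?thesis by (simp add: of_nat_diff)
    qed
    have "int (rook_num m k (b@[h])) = int (rook_num m (Suc k') b) + int (rook_num m k' b) * (int h - int m * int k')"
      unfolding Suc rook_snoc[OF m H] using eq by simp
    also have "\<dots> = R m k (root_vec m (b@[h]))"
      unfolding Suc root_vec_snoc R_snoc IH1 IH2 by (simp add: algebra_simps)
    finally show ?thesis .
  qed
qed


lemma okp_mono1: "m > 0 \<Longrightarrow> okp m x y \<Longrightarrow> x \<le> x' \<Longrightarrow> okp m x' y"
  unfolding okp_def
proof -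
  assume m: "m > 0" and h: "y \<le> int m * (x div int m + 1)" and xx: "x \<le> x'"
  have "x div int m \<le> x' div int m" using xx m by (simp add: zdiv_mono1)
  then have "int m * (x div int m + 1) \<le> int m * (x' div int m + 1)" using m by simp
  then show "y \<le> int m * (x' div int m + 1)" using h by linarith
qed

lemma okp_mono2: "okp m x y \<Longrightarrow> y' \<le> y \<Longrightarrow> okp m x y'"
  unfolding okp_def by linarith

lemma okp_le: "m > 0 \<Longrightarrow> y \<le> x \<Longrightarrow> okp m x y"
  unfolding okp_def
proof -
  assume m: "m > 0" and yx: "y \<le> x"
  have e: "int m * (x div int m) + x mod int m = x" by (rule mult_div_mod_eq)
  have "x mod int m < int m" using m by simp
  moreover have "int m * (x div int m + 1) = int m * (x div int m) + int m" by (simp add: algebra_simps)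
  ultimately have "x \<le> int m * (x div int m + 1)" using e by linarith
  then show "y \<le> int m * (x div int m + 1)" using yx by linarith
qed

definition swap :: "int list \<Rightarrow> nat \<Rightarrow> nat \<Rightarrow> int list" where
  "swap x a c = x[a := x!c, c := x!a]"

lemma swap_nth:
  assumes "a < length x" "c < length x" "a \<noteq> c" "t < length x"
  shows "swap x a c ! t = (if t = c then x!a else if t = a then x!c else x!t)"
  using assms unfolding swap_def by (auto simp: nth_list_update)

lemma swap_len[simp]: "length (swap x a c) = length x" unfolding swap_def by simp

lemma swap_vc:
  assumes m: "m > 0" and v: "vc m x" and ac: "0 < a" "a < c" "c < length x"
    and lt: "x!a < x!c" and pre: "x!c \<le> x!(a-1)" and post: "\<forall>l. c < l \<and> l < length x \<longrightarrow> x!l \<le> x!a"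
  shows "vc m (swap x a c)"
  unfolding vc_def
proof (intro allI impI)
  fix i assume i: "Suc i < length (swap x a c)"
  then have i': "Suc i < length x" by simp
  have sn: "\<And>t. t < length x \<Longrightarrow> swap x a c ! t = (if t = c then x!a else if t = a then x!c else x!t)"
    using swap_nth ac by simp
  have ok: "okp m (x!i) (x!Suc i)" using v i' unfolding vc_def by blast
  show "okp m (swap x a c ! i) (swap x a c ! Suc i)"
  proof -
    consider "Suc i = a" | "i = a \<and> Suc i = c" | "i = a \<and> Suc i < c" | "Suc i = c \<and> i > a" | "i = c"
      | "i \<noteq> a \<and> i \<noteq> c \<and> Suc i \<noteq> a \<and> Suc i \<noteq> c" using ac by linarith
    then show ?thesis
    proof cases
      case 1
      then have "swap x a c ! i = x!(a-1)" "swap x a c ! Suc i = x!c" using sn i' ac by auto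
      then show ?thesis using okp_le[OF m pre] by simp
    next
      case 2
      then have "swap x a c ! i = x!c" "swap x a c ! Suc i = x!a" using sn i' ac by auto
      then show ?thesis using okp_le[OF m] lt by simp
    next
      case 3
      then have "swap x a c ! i = x!c" "swap x a c ! Suc i = x!Suc i" using sn i' ac by auto
      then show ?thesis using okp_mono1[OF m ok] 3 lt by simp
    next
      case 4
      then have "swap x a c ! i = x!i" "swap x a c ! Suc i = x!a" using sn i' ac by auto
      then show ?thesis using okp_mono2[OF ok] 4 lt by simp
    next
      case 5
      then have "swap x a c ! i = x!a" "swap x a c ! Suc i = x!Suc i" using sn i' ac by auto
      then show ?thesis using okp_le[OF m] post 5 i' by simp
    next
      case 6
      then have "swap x a c ! i = x!i" "swap x a c ! Suc i = x!Suc i" using sn i' by auto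
      then show ?thesis using ok by simp
    qed
  qed
qed


definition Inv :: "nat \<Rightarrow> nat \<Rightarrow> int list \<Rightarrow> int list \<Rightarrow> bool" where
  "Inv m j x0 x \<longleftrightarrow> length x = length x0 \<and> vc m x \<and> (\<forall>i<length x. x!i \<le> int (m*i)) \<and>
     (\<forall>i\<le>j. x!i = x0!i) \<and> mset x = mset x0 \<and> (\<forall>l<length x. x!l \<le> x!j)"

definition Step :: "nat \<Rightarrow> nat \<Rightarrow> int list \<Rightarrow> int list \<Rightarrow> int list \<Rightarrow> bool" where
  "Step m j x0 x y \<longleftrightarrow> Inv m j x0 x \<and> Inv m j x0 y \<and>
     (\<exists>a c. j < a \<and> a < c \<and> c < length x \<and> x!a < x!c \<and> y = swap x a c)"

definition inplace :: "nat \<Rightarrow> nat \<Rightarrow> int list \<Rightarrow> bool" where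
  "inplace j p x \<longleftrightarrow> (\<forall>i l. j \<le> i \<longrightarrow> i < p \<longrightarrow> i \<le> l \<longrightarrow> l < length x \<longrightarrow> x!l \<le> x!i)"

lemma place:
  assumes m: "m > 0"
  shows "Inv m j x0 x \<Longrightarrow> j < p \<Longrightarrow> p < length x \<Longrightarrow> inplace j p x \<Longrightarrow>
    \<exists>y. (Step m j x0)\<^sup>*\<^sup>* x y \<and> Inv m j x0 y \<and> inplace j (Suc p) y"
proof (induction "nat (x!j - x!p)" arbitrary: x rule: less_induct)
  case less
  note I = less.prems(1)
  have jp: "j < p" and pn: "p < length x" and ip: "inplace j p x" using less.prems by auto
  show ?case
  proof (cases "\<forall>l. p \<le> l \<and> l < length x \<longrightarrow> x!l \<le> x!p")
    case True
    have "inplace j (Suc p) x" unfolding inplace_def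
    proof (intro allI impI)
      fix i l assume a: "j \<le> i" "i < Suc p" "i \<le> l" "l < length x"
      show "x!l \<le> x!i"
      proof (cases "i = p")
        case True then show ?thesis using \<open>\<forall>l. p \<le> l \<and> l < length x \<longrightarrow> x!l \<le> x!p\<close> a by auto
      next
        case False then show ?thesis using ip a unfolding inplace_def by auto
      qed
    qed
    then show ?thesis using I by blast
  next
    case False
    define S where "S = {l. p < l \<and> l < length x \<and> x!p < x!l}"
    obtain l0 where l0: "p \<le> l0" "l0 < length x" "\<not> x!l0 \<le> x!p" using False by blast
    then have "l0 \<noteq> p" by auto
    then have "l0 \<in> S" unfolding S_def using l0 by auto
    then have Sne: "S \<noteq> {}" by auto
    have Sf: "finite S" unfolding S_def by simp
    define c where "c = Max S"
    have cS: "c \<in> S" unfolding c_def using Max_in[OF Sf Sne] .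
    have pc: "p < c" "c < length x" "x!p < x!c" using cS unfolding S_def by auto
    have post: "\<forall>l. c < l \<and> l < length x \<longrightarrow> x!l \<le> x!p"
    proof (intro allI impI)
      fix l assume l: "c < l \<and> l < length x"
      show "x!l \<le> x!p"
      proof (rule ccontr)
        assume "\<not> x!l \<le> x!p"
        then have "l \<in> S" unfolding S_def using l pc by auto
        then have "l \<le> c" unfolding c_def using Max_ge[OF Sf] by blast
        then show False using l by simp
      qed
    qed
    have p1: "j \<le> p - 1" "p - 1 < p" using jp by auto
    have pre: "x!c \<le> x!(p-1)" using ip p1 pc unfolding inplace_def by auto
    define y where "y = swap x p c"
    have ylen: "length y = length x" unfolding y_def by simp
    have yn: "\<And>t. t < length x \<Longrightarrow> y ! t = (if t = c then x!p else if t = p then x!c else x!t)"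
      unfolding y_def using swap_nth pc pn by simp
    have Ix: "length x = length x0" "vc m x" "\<forall>i<length x. x!i \<le> int (m*i)"
      "\<forall>i\<le>j. x!i = x0!i" "mset x = mset x0" "\<forall>l<length x. x!l \<le> x!j"
      using I unfolding Inv_def by auto
    have yvc: "vc m y" unfolding y_def
      by (rule swap_vc[OF m Ix(2)]) (use jp pc pre post in auto)
    have xp1: "x!(p-1) \<le> int (m*(p-1))" using Ix(3) pn by auto
    have ybd: "\<forall>i<length y. y!i \<le> int (m*i)"
    proof (intro allI impI)
      fix i assume "i < length y"
      then have i: "i < length x" using ylen by simp
      show "y!i \<le> int (m*i)"
      proof (cases "i = c")
        case True then show ?thesis using yn[OF i] Ix(3) pc by force
      next
        case False
        show ?thesis
        proof (cases "i = p")
          case True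
          have "x!c \<le> int (m*(p-1))" using pre xp1 by linarith
          also have "\<dots> \<le> int (m*p)" by (simp only: of_nat_le_iff) simp
          finally show ?thesis using yn[OF i] True False by simp
        next
          case False2: False
          then show ?thesis using yn[OF i] False Ix(3) i by simp
        qed
      qed
    qed
    have yj: "\<forall>i\<le>j. y!i = x0!i" using yn Ix(4) jp pc pn by auto
    have ym: "mset y = mset x0" unfolding y_def swap_def using mset_swap[of c x p] pc pn Ix(5) by simp
    have yjj: "y!j = x!j" using yn jp pc pn by auto
    have ymax: "\<forall>l<length y. y!l \<le> y!j"
    proof (intro allI impI)
      fix l assume "l < length y"
      then have l: "l < length x" using ylen by simp
      show "y!l \<le> y!j" using yn[OF l] Ix(6) l pc pn yjj by auto
    qed
    have Iy: "Inv m j x0 y" unfolding Inv_def using ylen Ix(1) yvc ybd yj ym ymax by simp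
    have st: "Step m j x0 x y" unfolding Step_def using I Iy jp pc unfolding y_def by blast
    have ipy: "inplace j p y" unfolding inplace_def
    proof (intro allI impI)
      fix i l assume a: "j \<le> i" "i < p" "i \<le> l" "l < length y"
      then have l: "l < length x" using ylen by simp
      have ix: "i < length x" using a l by simp
      have yi: "y!i = x!i" using yn[OF ix] a pc by auto
      have "x!l \<le> x!i" "x!p \<le> x!i" "x!c \<le> x!i" using ip a l pc pn unfolding inplace_def by auto
      then show "y!l \<le> y!i" using yn[OF l] yi by auto
    qed
    have ypv: "y!p = x!c" using yn pn pc by simp
    have "y!p \<le> y!j" using ymax pn ylen by simp
    then have lt: "nat (y!j - y!p) < nat (x!j - x!p)" using ypv yjj pc by linarith
    obtain z where z: "(Step m j x0)\<^sup>*\<^sup>* y z" "Inv m j x0 z" "inplace j (Suc p) z"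
      using less.hyps[OF lt Iy jp _ ipy] pn ylen by auto
    have "(Step m j x0)\<^sup>*\<^sup>* x z" using st z(1) by (rule converse_rtranclp_into_rtranclp)
    then show ?thesis using z by blast
  qed
qed

lemma sort_all:
  assumes m: "m > 0" and I0: "Inv m j x0 x0" and jn: "j < length x0"
  shows "\<exists>y. (Step m j x0)\<^sup>*\<^sup>* x0 y \<and> Inv m j x0 y \<and> inplace j (length x0) y"
proof -
  have H: "\<forall>d. j + 1 + d \<le> length x0 \<longrightarrow> (\<exists>y. (Step m j x0)\<^sup>*\<^sup>* x0 y \<and> Inv m j x0 y \<and> inplace j (j+1+d) y)"
  proof
    fix d show "j + 1 + d \<le> length x0 \<longrightarrow> (\<exists>y. (Step m j x0)\<^sup>*\<^sup>* x0 y \<and> Inv m j x0 y \<and> inplace j (j+1+d) y)"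
    proof (induction d)
      case 0
      have "inplace j (j+1) x0" unfolding inplace_def
      proof (intro allI impI)
        fix i l assume a: "j \<le> i" "i < j+1" "i \<le> l" "l < length x0"
        then have ij: "i = j" by linarith
        have "\<forall>l<length x0. x0!l \<le> x0!j" using I0 unfolding Inv_def by blast
        then have "x0!l \<le> x0!j" using a(4) by blast
        then show "x0!l \<le> x0!i" using ij by simp
      qed
      then have "inplace j (j+1+0) x0" by simp
      moreover have "(Step m j x0)\<^sup>*\<^sup>* x0 x0" by (rule rtranclp.rtrancl_refl)
      ultimately show ?case using I0 by blast
    next
      case (Suc d)
      show ?case
      proof
        assume a: "j + 1 + Suc d \<le> length x0"
        then obtain y where y: "(Step m j x0)\<^sup>*\<^sup>* x0 y" "Inv m j x0 y" "inplace j (j+1+d) y"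
          using Suc.IH by auto
        have ly: "length y = length x0" using y(2) unfolding Inv_def by simp
        obtain z where z: "(Step m j x0)\<^sup>*\<^sup>* y z" "Inv m j x0 z" "inplace j (Suc (j+1+d)) z"
          using place[OF m y(2) _ _ y(3)] a ly by auto
        have "(Step m j x0)\<^sup>*\<^sup>* x0 z" using y(1) z(1) by (rule rtranclp_trans)
        then show "\<exists>y. (Step m j x0)\<^sup>*\<^sup>* x0 y \<and> Inv m j x0 y \<and> inplace j (j+1+Suc d) y"
          using z by auto
      qed
    qed
  qed
  have e: "j + 1 + (length x0 - j - 1) = length x0" using jn by simp
  have pr: "j + 1 + (length x0 - j - 1) \<le> length x0" using jn by simp
  obtain y where y: "(Step m j x0)\<^sup>*\<^sup>* x0 y" "Inv m j x0 y" "inplace j (j+1+(length x0 - j - 1)) y"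
    using H[rule_format, OF pr] by blast
  have "inplace j (length x0) y" using y(3) by (simp only: e)
  then show ?thesis using y by blast
qed


lemma bd_nth: "t < length x \<Longrightarrow> bd m x ! t = nat (int (m*t) - x!t)"
  unfolding bd_def by simp

lemma rook_edge_same:
  assumes "length p = length q" "i < length p" "j < length p" "i \<noteq> j" "k > 0"
    "p!i = q!i + k" "q!j = p!j + k" "\<forall>l<length p. l \<noteq> i \<longrightarrow> l \<noteq> j \<longrightarrow> p!l = q!l"
  shows "rook_edge p q"
proof -
  have pad0: "\<And>l::nat list. pad 0 l = l" unfolding pad_def by simp
  have "\<exists>i j k. i < length p \<and> j < length p \<and> i \<noteq> j \<and> k > 0 \<and>
            p ! i = q ! i + k \<and> q ! j = p ! j + k \<and>
            (\<forall>l<length p. l \<noteq> i \<longrightarrow> l \<noteq> j \<longrightarrow> p ! l = q ! l)"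
    by (rule exI[of _ i], rule exI[of _ j], rule exI[of _ k]) (use assms in simp)
  then show ?thesis unfolding rook_edge_def Let_def using assms(1)
    by (intro exI[of _ "length p"]) (simp add: pad0)
qed

lemma vertex:
  assumes m: "m > 0" and fb: "ferrers b" and sb: "singleton_board m b"
    and I: "Inv m j (root_vec m b) x"
  shows "bd m x \<in> graph_vertices m b"
proof -
  have bnd: "\<forall>i<length x. x!i \<le> int (m*i)" and v: "vc m x" and ms: "mset x = mset (root_vec m b)"
    using I unfolding Inv_def by auto
  have rb: "root_vec m (bd m x) = x" using root_bd[OF bnd] .
  have val: "ferrers (bd m x) \<and> singleton_board m (bd m x)" using valid_iff[OF m] rb v by simp
  have "rook_num m k (bd m x) = rook_num m k b" for k
  proof -
    have "int (rook_num m k (bd m x)) = R m k x" using rook_R[OF m] val rb by metis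
    also have "\<dots> = R m k (root_vec m b)" using R_mset[OF ms] .
    also have "\<dots> = int (rook_num m k b)" using rook_R[OF m fb sb] by simp
    finally show ?thesis by simp
  qed
  then show ?thesis unfolding graph_vertices_def rook_equiv_def using val by simp
qed

lemma step_edge:
  assumes m: "m > 0" and fb: "ferrers b" and sb: "singleton_board m b"
    and st: "Step m j (root_vec m b) x y"
  shows "graph_edge m b (bd m x) (bd m y)"
proof -
  have Ix: "Inv m j (root_vec m b) x" and Iy: "Inv m j (root_vec m b) y" using st unfolding Step_def by auto
  obtain a c where ac: "j < a" "a < c" "c < length x" "x!a < x!c" and y: "y = swap x a c"
    using st unfolding Step_def by auto
  have bx: "\<forall>i<length x. x!i \<le> int (m*i)" using Ix unfolding Inv_def by auto
  have by': "\<forall>i<length y. y!i \<le> int (m*i)" using Iy unfolding Inv_def by auto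
  have ly: "length y = length x" unfolding y by simp
  have yn: "\<And>t. t < length x \<Longrightarrow> y ! t = (if t = c then x!a else if t = a then x!c else x!t)"
    unfolding y using swap_nth ac by simp
  have ya: "x!c \<le> int (m*a)" using by'[rule_format, of a] yn[of a] ac ly by simp
  have xc: "x!c \<le> int (m*c)" using bx ac by simp
  define k where "k = nat (x!c - x!a)"
  have e1: "bd m x ! a = bd m y ! a + k"
  proof -
    have "bd m x ! a = nat (int (m*a) - x!a)" using bd_nth ac by simp
    moreover have "bd m y ! a = nat (int (m*a) - x!c)" using bd_nth[of a y] yn[of a] ac ly by simp
    ultimately show ?thesis unfolding k_def using ya ac by simp
  qed
  have e2: "bd m y ! c = bd m x ! c + k"
  proof -
    have "bd m x ! c = nat (int (m*c) - x!c)" using bd_nth ac by simp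
    moreover have "bd m y ! c = nat (int (m*c) - x!a)" using bd_nth[of c y] yn[of c] ac ly by simp
    ultimately show ?thesis unfolding k_def using xc ac by simp
  qed
  have e3: "\<forall>l<length (bd m x). l \<noteq> a \<longrightarrow> l \<noteq> c \<longrightarrow> bd m x ! l = bd m y ! l"
    using bd_nth[of _ x] bd_nth[of _ y] yn ly by simp
  have "rook_edge (bd m x) (bd m y)"
    by (rule rook_edge_same) (use ac ly e1 e2 e3 in \<open>auto simp: k_def\<close>)
  then show ?thesis unfolding graph_edge_def using vertex[OF m fb sb Ix] vertex[OF m fb sb Iy] by simp
qed

lemma steps_edges:
  assumes m: "m > 0" and fb: "ferrers b" and sb: "singleton_board m b"
  shows "(Step m j (root_vec m b))\<^sup>*\<^sup>* x y \<Longrightarrow> (graph_edge m b)\<^sup>*\<^sup>* (bd m x) (bd m y)"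
proof (induction rule: rtranclp_induct)
  case base then show ?case by simp
next
  case (step y z)
  show ?case by (rule rtranclp.rtrancl_into_rtrancl[OF step.IH step_edge[OF m fb sb step(2)]])
qed

theorem lemma19:
  fixes m :: nat and b :: "nat list" and j :: nat
  assumes "m > 0"
    and "ferrers b"
    and "singleton_board m b"
    and "j < length b"
    and "root_vec m b ! j = Max (set (root_vec m b))"
    and "\<forall>i<j. root_vec m b ! i \<noteq> Max (set (root_vec m b))"
  shows "\<exists>b'. length b' = length b \<and> (graph_edge m b)\<^sup>*\<^sup>* b b' \<and>
           (\<forall>i\<le>j. root_vec m b' ! i = root_vec m b ! i) \<and>
           (\<forall>i l. j \<le> i \<longrightarrow> i \<le> l \<longrightarrow> l < length b \<longrightarrow>
                  root_vec m b' ! l \<le> root_vec m b' ! i)"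
proof -
  note m = assms(1)
  define x0 where "x0 = root_vec m b"
  have lx0: "length x0 = length b" unfolding x0_def by simp
  have vx0: "vc m x0" using valid_iff[OF m, of b] assms(2) assms(3) unfolding x0_def by blast
  have bx0: "\<forall>i<length x0. x0!i \<le> int (m*i)" unfolding x0_def by (simp add: root_vec_nth)
  have mx0: "\<forall>l<length x0. x0!l \<le> x0!j"
  proof (intro allI impI)
    fix l assume "l < length x0"
    then have "x0!l \<in> set x0" by simp
    then have "x0!l \<le> Max (set x0)" by simp
    then show "x0!l \<le> x0!j" using assms(5) unfolding x0_def by simp
  qed
  have I0: "Inv m j x0 x0" unfolding Inv_def using vx0 bx0 mx0 by simp
  obtain y where y: "(Step m j x0)\<^sup>*\<^sup>* x0 y" "Inv m j x0 y" "inplace j (length x0) y"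
    using sort_all[OF m I0] assms(4) lx0 by auto
  have ly: "length y = length x0" and by0: "\<forall>i<length y. y!i \<le> int (m*i)" and yj: "\<forall>i\<le>j. y!i = x0!i"
    using y(2) unfolding Inv_def by auto
  have rb: "root_vec m (bd m y) = y" using root_bd[OF by0] .
  have "(graph_edge m b)\<^sup>*\<^sup>* (bd m x0) (bd m y)" using steps_edges[OF m assms(2,3)] y(1) unfolding x0_def by blast
  then have g: "(graph_edge m b)\<^sup>*\<^sup>* b (bd m y)" unfolding x0_def bd_root .
  show ?thesis
  proof (intro exI[of _ "bd m y"] conjI)
    show "length (bd m y) = length b" using ly lx0 by simp
    show "(graph_edge m b)\<^sup>*\<^sup>* b (bd m y)" using g .
    show "\<forall>i\<le>j. root_vec m (bd m y) ! i = root_vec m b ! i" using yj rb unfolding x0_def by simp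
    show "\<forall>i l. j \<le> i \<longrightarrow> i \<le> l \<longrightarrow> l < length b \<longrightarrow> root_vec m (bd m y) ! l \<le> root_vec m (bd m y) ! i"
    proof (intro allI impI)
      fix i l assume a: "j \<le> i" "i \<le> l" "l < length b"
      then have "y!l \<le> y!i" using y(3) lx0 ly unfolding inplace_def by auto
      then show "root_vec m (bd m y) ! l \<le> root_vec m (bd m y) ! i" using rb by simp
    qed
  qed
qed

end
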